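(* Let $0<p<1$ and $f\in L^p(\mathbb{R}^n)$. Then for every $\varepsilon>0$ there exists a sequence of rational functions $R_k\in\mathcal{A}$, $k\ge1$, such that $\sum_{k=1}^\infty\|R_k\|_p^p\le(1+\varepsilon)\|f\|_p^p$ and $\lim_{N\to\infty}\|f-\sum_{k=1}^N R_k\|_p=0$.
   Context: $\mathcal{A}$ is the set of functions on $\mathbb{R}^n$ of the form $R(x)=\dfrac{P(x)}{(1+x_1^2)^{l_1}\cdots(1+x_n^2)^{l_n}}$, where $l_1,\dots,l_n$ are nonnegative integers and $P(x)=\sum_{k_1=0}^{s_1}\cdots\sum_{k_n=0}^{s_n}\alpha_k x_1^{k_1}\cdots x_n^{k_n}$ is a polynomial with complex coefficients whose degree $s_j=\deg_jP$ in the variable $x_j$ satisfies $2l_j>\deg_jP$ for each $j=1,\dots,n$. $\|\cdot\|_p$ is the $L^p(\mathbb{R}^n)$ quasi-norm. *)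

theory Defs
  imports "HOL-Analysis.Analysis"
begin

definition ratA :: "(real^'n \<Rightarrow> complex) set" where
  "ratA = {R. \<exists>(l::'n \<Rightarrow> nat) (s::'n \<Rightarrow> nat) (\<alpha>::('n \<Rightarrow> nat) \<Rightarrow> complex).
      (\<forall>j. 2 * l j > s j) \<and>
      (\<forall>x. R x = (\<Sum>k\<in>{k. \<forall>j. k j \<le> s j}. \<alpha> k * (\<Prod>j\<in>UNIV. complex_of_real ((x $ j) ^ (k j))))
                 / complex_of_real (\<Prod>j\<in>UNIV. (1 + (x $ j)^2) ^ (l j)))}"

definition Lp_int :: "real \<Rightarrow> (real^'n \<Rightarrow> complex) \<Rightarrow> ennreal" where
  "Lp_int p f = (\<integral>\<^sup>+ x. ennreal (cmod (f x) powr p) \<partial>lebesgue)"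

definition in_Lp :: "real \<Rightarrow> (real^'n \<Rightarrow> complex) \<Rightarrow> bool" where
  "in_Lp p f \<longleftrightarrow> f \<in> borel_measurable lebesgue \<and> Lp_int p f < \<infinity>"

text \<open>The L^p quasi-norm (meaningful for f in L^p).\<close>
definition Lp_norm :: "real \<Rightarrow> (real^'n \<Rightarrow> complex) \<Rightarrow> real" where
  "Lp_norm p f = (enn2real (Lp_int p f)) powr (1 / p)"

end

theory Submission
  imports Defs
begin

lemma powr_add_le:
  fixes a b p :: real
  assumes "0 < p" "p \<le> 1" "0 \<le> a" "0 \<le> b"
  shows "(a+b) powr p \<le> a powr p + b powr p"
proof (cases "a + b = 0")
  case True then show ?thesis using assms by auto
next
  case False
  hence s: "a + b > 0" using assms by auto
  have ta: "a/(a+b) \<le> (a/(a+b)) powr p"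
  proof -
    have "a/(a+b) = (a/(a+b)) powr 1" using assms s by simp
    also have "\<dots> \<le> (a/(a+b)) powr p" by (rule powr_mono') (use assms s in auto)
    finally show ?thesis .
  qed
  have tb: "b/(a+b) \<le> (b/(a+b)) powr p"
  proof -
    have "b/(a+b) = (b/(a+b)) powr 1" using assms s by simp
    also have "\<dots> \<le> (b/(a+b)) powr p" by (rule powr_mono') (use assms s in auto)
    finally show ?thesis .
  qed
  have "1 = a/(a+b) + b/(a+b)" using s by (simp add: add_divide_distrib[symmetric])
  also have "\<dots> \<le> (a/(a+b)) powr p + (b/(a+b)) powr p" using ta tb by simp
  also have "\<dots> = (a powr p + b powr p) / (a+b) powr p"
    using assms s by (simp add: powr_divide add_divide_distrib)
  finally show ?thesis using s by (simp add: divide_simps)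
qed

lemma cmod_powr_tri:
  assumes "0 < p" "p \<le> 1"
  shows "cmod (a + b) powr p \<le> cmod a powr p + cmod b powr p"
proof -
  have "cmod (a+b) powr p \<le> (cmod a + cmod b) powr p"
    using assms by (intro powr_mono2) (auto simp: norm_triangle_ineq)
  also have "\<dots> \<le> cmod a powr p + cmod b powr p" using assms by (intro powr_add_le) auto
  finally show ?thesis .
qed

lemma Lp_int_tri:
  fixes f g :: "real^'n \<Rightarrow> complex"
  assumes "0 < p" "p \<le> 1" "f \<in> borel_measurable lebesgue" "g \<in> borel_measurable lebesgue"
  shows "Lp_int p (\<lambda>x. f x + g x) \<le> Lp_int p f + Lp_int p g"
proof -
  have "Lp_int p (\<lambda>x. f x + g x) \<le> (\<integral>\<^sup>+ x. ennreal (cmod (f x) powr p) + ennreal (cmod (g x) powr p) \<partial>lebesgue)"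
    unfolding Lp_int_def
    by (intro nn_integral_mono) (simp add: cmod_powr_tri assms flip: ennreal_plus)
  also have "\<dots> = Lp_int p f + Lp_int p g"
    unfolding Lp_int_def using assms by (intro nn_integral_add) auto
  finally show ?thesis .
qed

lemma Lp_int_diff_tri:
  fixes f g h :: "real^'n \<Rightarrow> complex"
  assumes "0 < p" "p \<le> 1" "f \<in> borel_measurable lebesgue" "g \<in> borel_measurable lebesgue"
    "h \<in> borel_measurable lebesgue"
  shows "Lp_int p (\<lambda>x. f x - h x) \<le> Lp_int p (\<lambda>x. f x - g x) + Lp_int p (\<lambda>x. g x - h x)"
  using Lp_int_tri[OF assms(1,2), of "\<lambda>x. f x - g x" "\<lambda>x. g x - h x"] assms by simp

lemma Lp_int_cmult:
  fixes f :: "real^'n \<Rightarrow> complex"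
  assumes "0 < p" "f \<in> borel_measurable lebesgue"
  shows "Lp_int p (\<lambda>x. c * f x) = ennreal (cmod c powr p) * Lp_int p f"
proof -
  have "Lp_int p (\<lambda>x. c * f x) = (\<integral>\<^sup>+ x. ennreal (cmod c powr p) * ennreal (cmod (f x) powr p) \<partial>lebesgue)"
    unfolding Lp_int_def by (simp add: norm_mult powr_mult ennreal_mult)
  also have "\<dots> = ennreal (cmod c powr p) * Lp_int p f"
    unfolding Lp_int_def using assms by (intro nn_integral_cmult) auto
  finally show ?thesis .
qed



definition kbox :: "('n::finite \<Rightarrow> nat) \<Rightarrow> ('n \<Rightarrow> nat) set" where
  "kbox s = {k. \<forall>j. k j \<le> s j}"

definition mon :: "('n::finite \<Rightarrow> nat) \<Rightarrow> real^'n \<Rightarrow> complex" where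
  "mon k x = (\<Prod>j\<in>UNIV. complex_of_real ((x $ j) ^ (k j)))"

definition Pol :: "('n::finite \<Rightarrow> nat) \<Rightarrow> (real^'n \<Rightarrow> complex) set" where
  "Pol s = {F. \<exists>\<alpha>. \<forall>x. F x = (\<Sum>k\<in>kbox s. \<alpha> k * mon k x)}"

definition den :: "('n::finite \<Rightarrow> nat) \<Rightarrow> real^'n \<Rightarrow> real" where
  "den l x = (\<Prod>j\<in>UNIV. (1 + (x $ j)^2) ^ (l j))"

definition Bc :: "(real^'n::finite \<Rightarrow> complex) set" where
  "Bc = {F. \<exists>s l P. (\<forall>j. s j \<le> 2 * l j) \<and> P \<in> Pol s \<and> (\<forall>x. F x = P x / complex_of_real (den l x))}"

lemma finite_kbox: "finite (kbox (s::'n::finite \<Rightarrow> nat))"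
proof -
  have "kbox s \<subseteq> PiE UNIV (\<lambda>j. {..s j})"
    by (auto simp: kbox_def PiE_def extensional_def)
  then show ?thesis by (rule finite_subset) (intro finite_PiE, auto)
qed

lemma zero_in_kbox: "(\<lambda>_. 0) \<in> kbox s"
  by (simp add: kbox_def)

lemma mon_add: "mon (\<lambda>j. a j + b j) x = mon a x * mon b x"
  by (simp add: mon_def power_add prod.distrib)

lemma mon_zero: "mon (\<lambda>_. 0) x = 1"
  by (simp add: mon_def)

lemma Pol_mono:
  assumes "\<forall>j. s j \<le> t j" "P \<in> Pol s"
  shows "P \<in> Pol t"
proof -
  obtain \<alpha> where a: "\<forall>x. P x = (\<Sum>k\<in>kbox s. \<alpha> k * mon k x)"
    using assms(2) by (auto simp: Pol_def)
  have sub: "kbox s \<subseteq> kbox t" using assms(1) by (auto simp: kbox_def intro: order_trans)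
  { fix x
    have "P x = (\<Sum>k\<in>kbox s. (if k \<in> kbox s then \<alpha> k else 0) * mon k x)"
      using a by simp
    also have "\<dots> = (\<Sum>k\<in>kbox t. (if k \<in> kbox s then \<alpha> k else 0) * mon k x)"
      by (rule sum.mono_neutral_left) (use sub finite_kbox in auto)
    finally have "P x = (\<Sum>k\<in>kbox t. (if k \<in> kbox s then \<alpha> k else 0) * mon k x)" . }
  then show ?thesis by (auto simp: Pol_def)
qed

lemma Pol_add:
  assumes "P \<in> Pol s" "Q \<in> Pol s"
  shows "(\<lambda>x. P x + Q x) \<in> Pol s"
proof -
  obtain \<alpha> where a: "\<forall>x. P x = (\<Sum>k\<in>kbox s. \<alpha> k * mon k x)"
    using assms(1) by (auto simp: Pol_def)
  obtain \<beta> where b: "\<forall>x. Q x = (\<Sum>k\<in>kbox s. \<beta> k * mon k x)"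
    using assms(2) by (auto simp: Pol_def)
  have "\<forall>x. P x + Q x = (\<Sum>k\<in>kbox s. (\<alpha> k + \<beta> k) * mon k x)"
    using a b by (simp add: sum.distrib distrib_right)
  then show ?thesis by (auto simp: Pol_def)
qed

lemma Pol_const: "(\<lambda>x. c) \<in> Pol s"
proof -
  have "\<forall>x. c = (\<Sum>k\<in>kbox s. (if k = (\<lambda>_. 0) then c else 0) * mon k x)"
  proof
    fix x
    have "(\<Sum>k\<in>kbox s. (if k = (\<lambda>_. 0) then c else 0) * mon k x) = (\<Sum>k\<in>kbox s. if k = (\<lambda>_. 0) then c * mon k x else 0)"
      by (rule sum.cong) auto
    then show "c = (\<Sum>k\<in>kbox s. (if k = (\<lambda>_. 0) then c else 0) * mon k x)"
      using zero_in_kbox[of s] finite_kbox[of s] by (simp add: mon_zero)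
  qed
  then show ?thesis by (auto simp: Pol_def)
qed

lemma Pol_coord: "(\<lambda>x. complex_of_real (x $ j)) \<in> Pol (\<lambda>i. if i = j then 1 else 0)"
proof -
  let ?e = "(\<lambda>i::'a. if i = j then 1 else (0::nat))"
  have e: "?e \<in> kbox ?e" by (simp add: kbox_def)
  have m: "mon ?e x = complex_of_real (x $ j)" for x
    by (simp add: mon_def if_distrib prod.If_cases)
  have "\<forall>x. complex_of_real (x $ j) = (\<Sum>k\<in>kbox ?e. (if k = ?e then 1 else 0) * mon k x)"
  proof
    fix x
    have "(\<Sum>k\<in>kbox ?e. (if k = ?e then 1 else 0) * mon k x) = (\<Sum>k\<in>kbox ?e. if k = ?e then mon k x else 0)"
      by (rule sum.cong) auto
    then show "complex_of_real (x $ j) = (\<Sum>k\<in>kbox ?e. (if k = ?e then 1 else 0) * mon k x)"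
      using e finite_kbox[of ?e] by (simp add: m)
  qed
  then show ?thesis by (auto simp: Pol_def)
qed

lemma Pol_mult:
  assumes "P \<in> Pol s" "Q \<in> Pol t"
  shows "(\<lambda>x. P x * Q x) \<in> Pol (\<lambda>j. s j + t j)"
proof -
  obtain \<alpha> where a: "\<forall>x. P x = (\<Sum>k\<in>kbox s. \<alpha> k * mon k x)"
    using assms(1) by (auto simp: Pol_def)
  obtain \<beta> where b: "\<forall>x. Q x = (\<Sum>k\<in>kbox t. \<beta> k * mon k x)"
    using assms(2) by (auto simp: Pol_def)
  define g where "g = (\<lambda>ab::('a\<Rightarrow>nat)\<times>('a\<Rightarrow>nat). (\<lambda>j. fst ab j + snd ab j))"
  define \<gamma> where "\<gamma> k = (\<Sum>ab\<in>{ab \<in> kbox s \<times> kbox t. g ab = k}. \<alpha> (fst ab) * \<beta> (snd ab))" for k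
  have gi: "g ` (kbox s \<times> kbox t) \<subseteq> kbox (\<lambda>j. s j + t j)"
    by (auto simp: g_def kbox_def add_mono)
  { fix x
    have "P x * Q x = (\<Sum>ab\<in>kbox s \<times> kbox t. \<alpha> (fst ab) * \<beta> (snd ab) * mon (g ab) x)"
      using a b by (simp add: sum_product sum.cartesian_product g_def mon_add mult_ac case_prod_beta)
    also have "\<dots> = (\<Sum>k\<in>kbox (\<lambda>j. s j + t j). \<Sum>ab\<in>{ab \<in> kbox s \<times> kbox t. g ab = k}. \<alpha> (fst ab) * \<beta> (snd ab) * mon (g ab) x)"
      by (rule sum.group[symmetric]) (use gi finite_kbox in auto)
    also have "\<dots> = (\<Sum>k\<in>kbox (\<lambda>j. s j + t j). \<gamma> k * mon k x)"
      unfolding \<gamma>_def sum_distrib_right by (intro sum.cong refl) auto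
    finally have "P x * Q x = (\<Sum>k\<in>kbox (\<lambda>j. s j + t j). \<gamma> k * mon k x)" . }
  then show ?thesis by (auto simp: Pol_def)
qed

lemma Pol_pow:
  assumes "P \<in> Pol s"
  shows "(\<lambda>x. P x ^ m) \<in> Pol (\<lambda>j. m * s j)"
proof (induction m)
  case 0 then show ?case using Pol_const[of 1] by simp
next
  case (Suc m)
  have "(\<lambda>x. P x * P x ^ m) \<in> Pol (\<lambda>j. s j + m * s j)"
    by (rule Pol_mult[OF assms Suc])
  then show ?case by (simp add: add.commute)
qed

lemma Pol_prod:
  assumes "finite J" "\<And>j. j \<in> J \<Longrightarrow> f j \<in> Pol (s j)"
  shows "(\<lambda>x. \<Prod>j\<in>J. f j x) \<in> Pol (\<lambda>i. \<Sum>j\<in>J. s j i)"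
  using assms
proof (induction J rule: finite_induct)
  case empty then show ?case using Pol_const[of 1] by simp
next
  case (insert a J)
  have "(\<lambda>x. f a x * (\<Prod>j\<in>J. f j x)) \<in> Pol (\<lambda>i. s a i + (\<Sum>j\<in>J. s j i))"
    by (rule Pol_mult) (use insert in auto)
  then show ?case using insert by simp
qed

lemma Pol_sq: "(\<lambda>x. complex_of_real (x $ j) * complex_of_real (x $ j)) \<in> Pol (\<lambda>i. if i = j then 2 else 0)"
proof -
  have e: "(\<lambda>i. (if i = j then 1 else 0) + (if i = j then 1 else (0::nat))) = (\<lambda>i. if i = j then 2 else 0)"
    by auto
  show ?thesis using Pol_mult[OF Pol_coord[of j] Pol_coord[of j]] unfolding e .
qed

lemma Pol_den: "(\<lambda>x. complex_of_real (den l x)) \<in> Pol (\<lambda>j. 2 * l j)"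
proof -
  have q: "(\<lambda>x. complex_of_real ((1 + (x $ j)^2) ^ (l j))) \<in> Pol (\<lambda>i. l j * (if i = j then 2 else 0))" for j
  proof -
    note c2 = Pol_sq[of j]
    have "(\<lambda>x. 1 + complex_of_real (x $ j) * complex_of_real (x $ j)) \<in> Pol (\<lambda>i. if i = j then 2 else 0)"
      by (rule Pol_add[OF Pol_const c2])
    from Pol_pow[OF this, of "l j"] show ?thesis by (simp add: power2_eq_square)
  qed
  have "(\<lambda>x. \<Prod>j\<in>UNIV. complex_of_real ((1 + (x $ j)^2) ^ (l j))) \<in> Pol (\<lambda>i. \<Sum>j\<in>UNIV. l j * (if i = j then 2 else 0))"
    by (rule Pol_prod) (use q in auto)
  moreover have "(\<lambda>i. \<Sum>j\<in>UNIV. l j * (if i = j then 2 else (0::nat))) = (\<lambda>j. 2 * l j)"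
    by (auto simp: if_distrib cong: if_cong)
  ultimately show ?thesis by (simp add: den_def)
qed

lemma den_pos: "den l x > 0"
  unfolding den_def by (intro prod_pos zero_less_power) (simp add: add_pos_nonneg)

lemma den_add: "den (\<lambda>j. l j + m j) x = den l x * den m x"
  by (simp add: den_def power_add prod.distrib)

lemma Bc_add:
  assumes "F \<in> Bc" "G \<in> Bc"
  shows "(\<lambda>x. F x + G x) \<in> Bc"
proof -
  obtain s l P where F: "\<forall>j. s j \<le> 2 * l j" "P \<in> Pol s" "\<forall>x. F x = P x / complex_of_real (den l x)"
    using assms(1) by (auto simp: Bc_def)
  obtain t m Q where G: "\<forall>j. t j \<le> 2 * m j" "Q \<in> Pol t" "\<forall>x. G x = Q x / complex_of_real (den m x)"
    using assms(2) by (auto simp: Bc_def)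
  have 1: "(\<lambda>x. P x * complex_of_real (den m x)) \<in> Pol (\<lambda>j. 2 * (l j + m j))"
    by (rule Pol_mono[OF _ Pol_mult[OF F(2) Pol_den]]) (use F(1) in auto)
  have 2: "(\<lambda>x. Q x * complex_of_real (den l x)) \<in> Pol (\<lambda>j. 2 * (l j + m j))"
    by (rule Pol_mono[OF _ Pol_mult[OF G(2) Pol_den]]) (use G(1) in auto)
  have "\<forall>x. F x + G x = (P x * complex_of_real (den m x) + Q x * complex_of_real (den l x)) / complex_of_real (den (\<lambda>j. l j + m j) x)"
  proof
    fix x
    have a: "complex_of_real (den l x) \<noteq> 0" "complex_of_real (den m x) \<noteq> 0"
      using den_pos[of l x] den_pos[of m x] by auto
    show "F x + G x = (P x * complex_of_real (den m x) + Q x * complex_of_real (den l x)) / complex_of_real (den (\<lambda>j. l j + m j) x)"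
      using a F(3) G(3) by (simp add: den_add field_simps)
  qed
  then show ?thesis unfolding Bc_def using Pol_add[OF 1 2]
    by (intro CollectI exI[of _ "\<lambda>j. 2 * (l j + m j)"] exI[of _ "\<lambda>j. l j + m j"] exI[of _ "\<lambda>x. P x * complex_of_real (den m x) + Q x * complex_of_real (den l x)"]) auto
qed

lemma Bc_mult:
  assumes "F \<in> Bc" "G \<in> Bc"
  shows "(\<lambda>x. F x * G x) \<in> Bc"
proof -
  obtain s l P where F: "\<forall>j. s j \<le> 2 * l j" "P \<in> Pol s" "\<forall>x. F x = P x / complex_of_real (den l x)"
    using assms(1) by (auto simp: Bc_def)
  obtain t m Q where G: "\<forall>j. t j \<le> 2 * m j" "Q \<in> Pol t" "\<forall>x. G x = Q x / complex_of_real (den m x)"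
    using assms(2) by (auto simp: Bc_def)
  have "\<forall>x. F x * G x = (P x * Q x) / complex_of_real (den (\<lambda>j. l j + m j) x)"
    using F(3) G(3) by (simp add: den_add)
  moreover have "\<forall>j. s j + t j \<le> 2 * (l j + m j)" using F(1) G(1) by (simp add: add_mono)
  ultimately show ?thesis unfolding Bc_def using Pol_mult[OF F(2) G(2)]
    by (intro CollectI exI[of _ "\<lambda>j. s j + t j"] exI[of _ "\<lambda>j. l j + m j"] exI[of _ "\<lambda>x. P x * Q x"]) auto
qed

lemma Bc_const: "(\<lambda>x. c) \<in> Bc"
proof -
  have "\<forall>x. c = c / complex_of_real (den (\<lambda>_. 0) x)" by (simp add: den_def)
  then show ?thesis unfolding Bc_def using Pol_const[of c "\<lambda>_. 0"]
    by (intro CollectI exI[of _ "\<lambda>_. 0"] exI[of _ "\<lambda>_. 0"] exI[of _ "\<lambda>x. c"]) auto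
qed

lemma Bc_sum:
  assumes "finite J" "\<And>j. j \<in> J \<Longrightarrow> f j \<in> Bc"
  shows "(\<lambda>x. \<Sum>j\<in>J. f j x) \<in> Bc"
  using assms
proof (induction J rule: finite_induct)
  case empty then show ?case using Bc_const[of 0] by simp
next
  case (insert a J)
  have "(\<lambda>x. f a x + (\<Sum>j\<in>J. f j x)) \<in> Bc"
    by (rule Bc_add) (use insert in auto)
  then show ?case using insert by simp
qed

lemma den_unit: "den (\<lambda>i. if i = j then 1 else 0) x = 1 + (x $ j)^2"
  by (simp add: den_def if_distrib prod.If_cases cong: if_cong)

lemma Bc_frac:
  assumes "P \<in> Pol (\<lambda>i. if i = j then 2 else 0)"
  shows "(\<lambda>x. P x / complex_of_real (1 + (x $ j)^2)) \<in> Bc"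
  unfolding Bc_def using assms den_unit[of j, symmetric]
  by (intro CollectI exI[of _ "\<lambda>i. if i = j then 2 else 0"] exI[of _ "\<lambda>i. if i = j then 1 else 0"] exI[of _ P]) auto

lemma Bc_A: "(\<lambda>x. complex_of_real (2 * x $ j / (1 + (x $ j)^2))) \<in> Bc"
proof -
  have "(\<lambda>x. 2 * complex_of_real (x $ j)) \<in> Pol (\<lambda>i. if i = j then 2 else 0)"
    by (rule Pol_mono[OF _ Pol_mult[OF Pol_const[of 2 "\<lambda>_. 0"] Pol_coord[of j]]]) auto
  from Bc_frac[OF this] show ?thesis by simp
qed

lemma Bc_C: "(\<lambda>x. complex_of_real ((1 - (x $ j)^2) / (1 + (x $ j)^2))) \<in> Bc"
proof -
  note c2 = Pol_sq[of j]
  have "(\<lambda>x. 1 + (-1) * (complex_of_real (x $ j) * complex_of_real (x $ j))) \<in> Pol (\<lambda>i. if i = j then 2 else 0)"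
    by (rule Pol_add[OF Pol_const Pol_mono[OF _ Pol_mult[OF Pol_const c2]]]) auto
  from Bc_frac[OF this] show ?thesis by (simp add: power2_eq_square)
qed

lemma Bc_ratA:
  assumes "F \<in> Bc" "L \<ge> 1"
  shows "(\<lambda>x. F x / complex_of_real (den (\<lambda>_. L) x)) \<in> ratA"
proof -
  obtain s l P where F: "\<forall>j. s j \<le> 2 * l j" "P \<in> Pol s" "\<forall>x. F x = P x / complex_of_real (den l x)"
    using assms(1) by (auto simp: Bc_def)
  obtain \<alpha> where a: "\<forall>x. P x = (\<Sum>k\<in>kbox s. \<alpha> k * mon k x)"
    using F(2) by (auto simp: Pol_def)
  have eq: "\<forall>x. F x / complex_of_real (den (\<lambda>_. L) x) = P x / complex_of_real (den (\<lambda>j. l j + L) x)"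
    using F(3) by (simp add: den_add)
  have c1: "\<forall>j. s j < 2 * (l j + L)"
  proof
    fix j
    have "s j \<le> 2 * l j" using F(1) by auto
    then show "s j < 2 * (l j + L)" using assms(2) by simp
  qed
  have c2: "\<forall>x. F x / complex_of_real (den (\<lambda>_. L) x) = (\<Sum>k\<in>{k. \<forall>j. k j \<le> s j}. \<alpha> k * (\<Prod>j\<in>UNIV. complex_of_real ((x $ j) ^ (k j)))) / complex_of_real (\<Prod>j\<in>UNIV. (1 + (x $ j)^2) ^ (l j + L))"
    using eq a unfolding kbox_def mon_def den_def by simp
  show ?thesis unfolding ratA_def
    by (intro CollectI exI[of _ "\<lambda>j. l j + L"] exI[of _ s] exI[of _ \<alpha>]) (use c1 c2 in simp)
qed



lemma den_ge1: "den l x \<ge> 1"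
  unfolding den_def by (intro prod_ge_1 one_le_power) simp

lemma den_ge_factor: "den l x \<ge> (1 + (x $ j)^2) ^ l j"
proof -
  have "den l x = (1 + (x $ j)^2) ^ l j * (\<Prod>i\<in>UNIV - {j}. (1 + (x $ i)^2) ^ l i)"
    unfolding den_def by (rule prod.remove) auto
  moreover have "(\<Prod>i\<in>UNIV - {j}. (1 + (x $ i)^2) ^ l i) \<ge> 1"
    by (intro prod_ge_1 one_le_power) simp
  moreover have "(1 + (x $ j)^2) ^ l j * 1 \<le> (1 + (x $ j)^2) ^ l j * (\<Prod>i\<in>UNIV - {j}. (1 + (x $ i)^2) ^ l i)"
    using calculation(2) by (intro mult_left_mono) auto
  ultimately show ?thesis by simp
qed

definition Bx :: "nat \<Rightarrow> (real^'n) set" where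
  "Bx m = cbox (vec (-(2^m))) (vec (2^m))"

lemma mem_Bx: "x \<in> Bx m \<longleftrightarrow> (\<forall>j. \<bar>x $ j\<bar> \<le> 2^m)"
  by (auto simp: Bx_def mem_box_cart abs_le_iff; metis minus_le_iff neg_le_iff_le)

lemma Bx_sets[measurable]: "Bx m \<in> sets lebesgue"
  unfolding Bx_def by (simp add: lmeasurable_cbox fmeasurableD)

lemma emeasure_Bx: "emeasure lebesgue (Bx m :: (real^'n) set) = ennreal ((2^(m+1)) ^ CARD('n))"
proof -
  have ne: "Bx m \<noteq> ({} :: (real^'n) set)"
    using mem_Bx[of "0::real^'n" m] by auto
  have "emeasure lebesgue (Bx m :: (real^'n) set) = ennreal (measure lborel (Bx m :: (real^'n) set))"
    unfolding Bx_def by (simp add: emeasure_eq_measure2 lmeasurable_cbox)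
  also have "measure lborel (Bx m :: (real^'n) set) = (2^(m+1)) ^ CARD('n)"
    using ne unfolding Bx_def by (simp add: content_cbox_cart)
  finally show ?thesis .
qed

lemma weight_int:
  fixes L :: nat and p :: real
  assumes p: "0 < p" and n: "real CARD('n) < 2 * L * p"
  shows "(\<integral>\<^sup>+x. ennreal ((1 / den (\<lambda>_. L) (x::real^'n)) powr p) \<partial>lebesgue) < \<infinity>"
proof -
  define q where "q = (4::real) powr (-(L*p))"
  have q0: "0 < q" by (simp add: q_def)
  have q1: "q \<le> 1"
  proof -
    have "q \<le> 4 powr 0" unfolding q_def using p by (intro powr_mono) auto
    then show ?thesis by simp
  qed
  define c where "c m = q ^ m / q" for m :: nat
  have ptw: "ennreal ((1 / den (\<lambda>_. L) x) powr p) \<le> (\<Sum>m. ennreal (c m) * indicator (Bx m) x)" for x :: "real^'n"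
  proof -
    obtain m where m: "norm x < 2 ^ m" using real_arch_pow[of 2 "norm x"] by auto
    have "x \<in> Bx m" unfolding mem_Bx
    proof
      fix j
      have "\<bar>x $ j\<bar> \<le> norm x" by (rule component_le_norm_cart)
      then show "\<bar>x $ j\<bar> \<le> 2 ^ m" using m by linarith
    qed
    define m0 where "m0 = (LEAST m. x \<in> Bx m)"
    have xm0: "x \<in> Bx m0" unfolding m0_def by (rule LeastI) fact
    have bnd: "(1 / den (\<lambda>_. L) x) powr p \<le> c m0"
    proof (cases m0)
      case 0
      have "(1 / den (\<lambda>_. L) x) powr p \<le> 1"
        using den_ge1[of "\<lambda>_. L" x] p by (intro powr_le1) auto
      also have "1 \<le> c m0" using 0 q0 q1 by (simp add: c_def)
      finally show ?thesis .
    next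
      case (Suc k)
      have "x \<notin> Bx k" using not_less_Least[of k "\<lambda>m. x \<in> Bx m"] Suc unfolding m0_def by auto
      then obtain j where j: "\<bar>x $ j\<bar> > 2^k" unfolding mem_Bx by (auto simp: not_le)
      have "(4::real)^k = (2^k)^2" by (simp add: power2_eq_square power_mult_distrib[symmetric])
      also have "\<dots> \<le> \<bar>x $ j\<bar>^2" by (rule power_mono) (use j in auto)
      also have "\<dots> = (x $ j)^2" by simp
      also have "\<dots> \<le> 1 + (x $ j)^2" by simp
      finally have 4: "(4::real)^k \<le> 1 + (x $ j)^2" .
      have "((4::real)^k)^L \<le> (1 + (x $ j)^2)^L" by (rule power_mono[OF 4]) simp
      also have "\<dots> \<le> den (\<lambda>_. L) x" using den_ge_factor[where l="\<lambda>_. L" and x=x and j=j] by simp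
      finally have dk: "((4::real)^k)^L \<le> den (\<lambda>_. L) x" .
      have "(1 / den (\<lambda>_. L) x) powr p = den (\<lambda>_. L) x powr (-p)"
        using den_pos[of "\<lambda>_. L" x] by (simp add: powr_minus_divide powr_divide)
      also have "\<dots> \<le> (((4::real)^k)^L) powr (-p)"
        using dk p by (intro powr_mono2') auto
      also have "(((4::real)^k)^L) powr (-p) = q ^ k"
      proof -
        have "((4::real)^k)^L = 4 ^ (k*L)" by (simp add: power_mult)
        also have "\<dots> = 4 powr (real (k*L))" by (rule powr_realpow[symmetric]) simp
        finally have "((4::real)^k)^L = 4 powr (real (k*L))" .
        then have "(((4::real)^k)^L) powr (-p) = 4 powr (real (k*L) * -p)" by (simp add: powr_powr)
        also have "\<dots> = 4 powr (real k * (-(L*p)))" by (simp add: algebra_simps)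
        also have "\<dots> = q ^ k" unfolding q_def by (rule powr_power[symmetric]) simp
        finally show ?thesis .
      qed
      also have "q ^ k = c m0" using Suc q0 by (simp add: c_def)
      finally show ?thesis .
    qed
    have "ennreal ((1 / den (\<lambda>_. L) x) powr p) \<le> ennreal (c m0) * indicator (Bx m0) x"
      using bnd xm0 by (simp add: ennreal_leI)
    also have "\<dots> \<le> (\<Sum>m<Suc m0. ennreal (c m) * indicator (Bx m) x)"
      by (rule member_le_sum[of m0 "{..<Suc m0}" "\<lambda>m. ennreal (c m) * indicator (Bx m) x"]) auto
    also have "\<dots> \<le> (\<Sum>m. ennreal (c m) * indicator (Bx m) x)"
      by (rule sum_le_suminf) auto
    finally show ?thesis .
  qed
  have "(\<integral>\<^sup>+x. ennreal ((1 / den (\<lambda>_. L) (x::real^'n)) powr p) \<partial>lebesgue) \<le> (\<integral>\<^sup>+x. (\<Sum>m. ennreal (c m) * indicator (Bx m) (x::real^'n)) \<partial>lebesgue)"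
    by (intro nn_integral_mono) (use ptw in blast)
  also have "\<dots> = (\<Sum>m. \<integral>\<^sup>+x. ennreal (c m) * indicator (Bx m :: (real^'n) set) x \<partial>lebesgue)"
    by (rule nn_integral_suminf) measurable
  also have "\<dots> = (\<Sum>m. ennreal (c m * (2^(m+1)) ^ CARD('n)))"
  proof -
    have T: "(\<integral>\<^sup>+x. ennreal (c m) * indicator (Bx m :: (real^'n) set) x \<partial>lebesgue) = ennreal (c m * (2^(m+1)) ^ CARD('n))" for m
    proof -
      have "(\<integral>\<^sup>+x. ennreal (c m) * indicator (Bx m :: (real^'n) set) x \<partial>lebesgue) = ennreal (c m) * emeasure lebesgue (Bx m :: (real^'n) set)"
        by (rule nn_integral_cmult_indicator) simp
      also have "\<dots> = ennreal (c m) * ennreal ((2^(m+1)) ^ CARD('n))" by (simp only: emeasure_Bx)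
      also have "\<dots> = ennreal (c m * (2^(m+1)) ^ CARD('n))" by (rule ennreal_mult[symmetric]) (use q0 in \<open>auto simp: c_def\<close>)
      finally show ?thesis .
    qed
    show ?thesis by (simp only: T)
  qed
  also have "\<dots> = ennreal (\<Sum>m. c m * (2^(m+1)) ^ CARD('n))"
  proof (rule suminf_ennreal2)
    show "\<And>m. 0 \<le> c m * (2 ^ (m + 1)) ^ CARD('n)" using q0 by (simp add: c_def)
    define r where "r = q * 2 ^ CARD('n)"
    have r0: "0 \<le> r" using q0 by (simp add: r_def)
    have "2 ^ CARD('n) = (2::real) powr CARD('n)" by (simp add: powr_realpow)
    also have "\<dots> < 2 powr (2 * L * p)" using n by simp
    also have "\<dots> = 4 powr (L * p)" by (simp add: powr_powr[symmetric] mult.assoc)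
    finally have "q * 2 ^ CARD('n) < q * 4 powr (L * p)" using q0 by simp
    also have "q * 4 powr (L * p) = 1" unfolding q_def by (simp add: powr_add[symmetric])
    finally have r1: "r < 1" by (simp add: r_def)
    have "summable (\<lambda>m. (2 ^ CARD('n) / q) * r ^ m)"
      using r0 r1 by (intro summable_mult summable_geometric) simp
    moreover have "c m * (2 ^ (m + 1)) ^ CARD('n) = (2 ^ CARD('n) / q) * r ^ m" for m
    proof -
      have e: "((2::real)^m)^CARD('n) = (2^CARD('n))^m" by (simp add: power_mult[symmetric] mult.commute)
      show ?thesis using q0 by (simp add: c_def r_def e power_mult_distrib power_add field_simps)
    qed
    ultimately show "summable (\<lambda>m. c m * (2 ^ (m + 1)) ^ CARD('n))" by simp
  qed
  also have "\<dots> < \<infinity>" by simp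
  finally show ?thesis .
qed



lemma cont_meas:
  fixes f :: "real^'n \<Rightarrow> 'b::{second_countable_topology, topological_space}"
  assumes "continuous_on UNIV f"
  shows "f \<in> borel_measurable lebesgue"
proof -
  have "f \<in> borel_measurable borel" using assms by (rule borel_measurable_continuous_onI)
  then have "f \<in> borel_measurable lborel" by simp
  then show ?thesis by (rule measurable_completion)
qed

definition Ha :: "real^'n \<Rightarrow> real^'n" where
  "Ha x = (\<chi> j. 2 * x $ j / (1 + (x $ j)^2))"
definition Hc :: "real^'n \<Rightarrow> real^'n" where
  "Hc x = (\<chi> j. (1 - (x $ j)^2) / (1 + (x $ j)^2))"
definition Hm :: "real^'n \<Rightarrow> (real^'n) \<times> (real^'n)" where
  "Hm x = (Ha x, Hc x)"

lemma Bc_inner_Ha: "(\<lambda>x. complex_of_real (Ha x \<bullet> u)) \<in> Bc"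
proof -
  have "(\<lambda>x. \<Sum>j\<in>UNIV. complex_of_real (2 * x $ j / (1 + (x $ j)^2)) * complex_of_real (u $ j)) \<in> Bc"
    by (intro Bc_sum Bc_mult Bc_A Bc_const) auto
  moreover have "complex_of_real (Ha x \<bullet> u) = (\<Sum>j\<in>UNIV. complex_of_real (2 * x $ j / (1 + (x $ j)^2)) * complex_of_real (u $ j))" for x
    by (simp add: Ha_def inner_vec_def)
  ultimately show ?thesis by simp
qed

lemma Bc_inner_Hc: "(\<lambda>x. complex_of_real (Hc x \<bullet> u)) \<in> Bc"
proof -
  have "(\<lambda>x. \<Sum>j\<in>UNIV. complex_of_real ((1 - (x $ j)^2) / (1 + (x $ j)^2)) * complex_of_real (u $ j)) \<in> Bc"
    by (intro Bc_sum Bc_mult Bc_C Bc_const) auto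
  moreover have "complex_of_real (Hc x \<bullet> u) = (\<Sum>j\<in>UNIV. complex_of_real ((1 - (x $ j)^2) / (1 + (x $ j)^2)) * complex_of_real (u $ j))" for x
    by (simp add: Hc_def inner_vec_def)
  ultimately show ?thesis by simp
qed

lemma Bc_inner_Hm: "(\<lambda>x. complex_of_real (Hm x \<bullet> b)) \<in> Bc"
proof -
  have "(\<lambda>x. complex_of_real (Ha x \<bullet> fst b) + complex_of_real (Hc x \<bullet> snd b)) \<in> Bc"
    by (intro Bc_add Bc_inner_Ha Bc_inner_Hc)
  moreover have "Hm x \<bullet> b = Ha x \<bullet> fst b + Hc x \<bullet> snd b" for x
    by (cases b) (simp add: Hm_def)
  ultimately show ?thesis by simp
qed

lemma Bc_rpf:
  assumes "real_polynomial_function q"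
  shows "(\<lambda>x. complex_of_real (q (Hm x))) \<in> Bc"
  using assms
proof (induction rule: real_polynomial_function.induct)
  case (linear f)
  have lin: "linear f" using linear by (rule bounded_linear.linear)
  have e: "f v = (\<Sum>b\<in>Basis. (v \<bullet> b) * f b)" for v
    using Linear_Algebra.linear_componentwise[OF lin, of v 1] by simp
  have "(\<lambda>x. \<Sum>b\<in>Basis. complex_of_real (Hm x \<bullet> b) * complex_of_real (f b)) \<in> Bc"
    by (intro Bc_sum Bc_mult Bc_inner_Hm Bc_const) auto
  moreover have "complex_of_real (f (Hm x)) = (\<Sum>b\<in>Basis. complex_of_real (Hm x \<bullet> b) * complex_of_real (f b))" for x
    by (subst e) simp
  ultimately show ?case by simp
next
  case (const c) then show ?case by (rule Bc_const)
next
  case (add f g) then show ?case using Bc_add[OF add.IH] by simp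
next
  case (mult f g) then show ?case using Bc_mult[OF mult.IH] by simp
qed

lemma Bc_pf:
  fixes Q :: "(real^'n) \<times> (real^'n) \<Rightarrow> complex"
  assumes "polynomial_function Q"
  shows "(\<lambda>x. Q (Hm x)) \<in> Bc"
proof -
  have r: "real_polynomial_function (Re \<circ> Q)" "real_polynomial_function (Im \<circ> Q)"
    using assms unfolding polynomial_function_def by (auto intro: bounded_linear_Re bounded_linear_Im)
  have "(\<lambda>x. complex_of_real ((Re \<circ> Q) (Hm x)) + complex_of_real ((Im \<circ> Q) (Hm x)) * \<i>) \<in> Bc"
    by (intro Bc_add Bc_mult Bc_rpf r Bc_const)
  moreover have "complex_of_real ((Re \<circ> Q) v) + complex_of_real ((Im \<circ> Q) v) * \<i> = Q v" for v
    by (simp add: complex_eq_iff)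
  ultimately show ?thesis by simp
qed

lemma continuous_Hm: "continuous_on UNIV (Hm :: real^'n \<Rightarrow> _)"
proof -
  have "continuous_on UNIV (\<lambda>x::real^'n. 1 + (x $ j)^2)" for j by (intro continuous_intros)
  have pos: "1 + (x $ j)^2 \<noteq> 0" for x :: "real^'n" and j
    by (metis add_pos_nonneg zero_less_one zero_le_power2 less_irrefl)
  show ?thesis unfolding Hm_def Ha_def Hc_def
    by (intro continuous_intros) (use pos in auto)
qed

lemma norm_Hm: "norm (Hm x) \<le> 2 * real CARD('n)" for x :: "real^'n"
proof -
  have a: "\<bar>Ha x $ j\<bar> \<le> 1" for j
  proof -
    have "2 * \<bar>x $ j\<bar> \<le> 1 + (x $ j)^2"
      using sum_squares_bound[of "\<bar>x$j\<bar>" 1] by (simp add: power2_abs)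
    then show ?thesis unfolding Ha_def by (simp add: abs_mult divide_le_eq_1 abs_divide) (smt (verit) zero_le_power2)
  qed
  have c: "\<bar>Hc x $ j\<bar> \<le> 1" for j
    unfolding Hc_def by (simp add: abs_divide divide_le_eq_1) (smt (verit) zero_le_power2)
  have "norm (Ha x) \<le> (\<Sum>j\<in>UNIV. \<bar>Ha x $ j\<bar>)" by (rule norm_le_l1_cart)
  also have "\<dots> \<le> real CARD('n)" using sum_mono[of UNIV "\<lambda>j. \<bar>Ha x $ j\<bar>" "\<lambda>_. 1"] a by simp
  finally have 1: "norm (Ha x) \<le> real CARD('n)" .
  have "norm (Hc x) \<le> (\<Sum>j\<in>UNIV. \<bar>Hc x $ j\<bar>)" by (rule norm_le_l1_cart)
  also have "\<dots> \<le> real CARD('n)" using sum_mono[of UNIV "\<lambda>j. \<bar>Hc x $ j\<bar>" "\<lambda>_. 1"] c by simp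
  finally have 2: "norm (Hc x) \<le> real CARD('n)" .
  have "norm (Hm x) \<le> norm (Ha x) + norm (Hc x)" unfolding Hm_def by (rule norm_Pair_le)
  then show ?thesis using 1 2 by simp
qed



lemma Hc_plus1: "1 + Hc x $ j = 2 / (1 + (x $ j)^2)"
proof -
  have "1 + (x $ j)^2 > 0" by (simp add: add_pos_nonneg)
  then show ?thesis unfolding Hc_def by (simp add: field_simps)
qed

lemma Ha_div: "Ha x $ j / (1 + Hc x $ j) = x $ j"
proof -
  have "1 + (x $ j)^2 > 0" by (simp add: add_pos_nonneg)
  then show ?thesis unfolding Hc_plus1 by (simp add: Ha_def field_simps)
qed

definition rho :: "real \<Rightarrow> real \<Rightarrow> real" where
  "rho \<tau> t = min 1 (max 0 ((2 * (1 + t) - \<tau>) / \<tau>))"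

definition Gm :: "real \<Rightarrow> (real^'n \<Rightarrow> complex) \<Rightarrow> (real^'n) \<times> (real^'n) \<Rightarrow> complex" where
  "Gm \<tau> \<psi> v = \<psi> (\<chi> j. fst v $ j / max (1 + snd v $ j) (\<tau>/2)) * complex_of_real (\<Prod>j\<in>UNIV. rho \<tau> (snd v $ j))"

lemma Gm_cont:
  fixes \<psi> :: "real^'n \<Rightarrow> complex"
  assumes "continuous_on UNIV \<psi>" "\<tau> > 0"
  shows "continuous_on UNIV (Gm \<tau> \<psi>)"
proof -
  have d: "max (1 + b $ j) (\<tau>/2) \<noteq> 0" for b :: "real^'n" and j
    using assms(2) by (metis half_gt_zero less_max_iff_disj less_irrefl max.commute)
  have c1: "continuous_on UNIV (\<lambda>v::(real^'n) \<times> (real^'n). \<chi> j. fst v $ j / max (1 + snd v $ j) (\<tau>/2))"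
    by (intro continuous_intros) (use d in auto)
  have c2: "continuous_on UNIV (\<lambda>v::(real^'n) \<times> (real^'n). \<psi> (\<chi> j. fst v $ j / max (1 + snd v $ j) (\<tau>/2)))"
    by (rule continuous_on_compose2[OF assms(1) c1]) auto
  have c3: "continuous_on UNIV (\<lambda>v::(real^'n) \<times> (real^'n). complex_of_real (\<Prod>j\<in>UNIV. rho \<tau> (snd v $ j)))"
    unfolding rho_def by (intro continuous_intros) (use assms(2) in auto)
  show ?thesis unfolding Gm_def[abs_def] by (intro continuous_on_mult c2 c3)
qed

lemma Gm_Hm:
  assumes M: "M \<ge> 0" and supp: "\<And>x. \<psi> x \<noteq> 0 \<Longrightarrow> (\<forall>j. \<bar>x $ j\<bar> \<le> M)"
  shows "Gm (2 / (1 + M^2)) \<psi> (Hm x) = \<psi> x"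
proof -
  define \<tau> where "\<tau> = 2 / (1 + M^2)"
  have t0: "\<tau> > 0" unfolding \<tau>_def by (simp add: add_pos_nonneg)
  have vx: "(\<chi> j. Ha x $ j / max (1 + Hc x $ j) (\<tau>/2)) = x" if "\<forall>j. 1 + Hc x $ j \<ge> \<tau>/2"
    using that by (simp add: vec_eq_iff Ha_div max_absorb1)
  show ?thesis
  proof (cases "\<psi> x = 0")
    case False
    have big: "1 + Hc x $ j \<ge> \<tau>" for j
    proof -
      have "\<bar>x $ j\<bar> \<le> M" using supp False by auto
      then have "(x $ j)^2 \<le> M^2" by (metis abs_ge_zero power2_abs power_mono)
      then show ?thesis unfolding Hc_plus1 \<tau>_def
        by (intro divide_left_mono) (auto simp: add_pos_nonneg)
    qed
    have "\<forall>j. 1 + Hc x $ j \<ge> \<tau>/2" using big t0 by (smt (verit) field_sum_of_halves)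
    note v = vx[OF this]
    have r: "rho \<tau> (Hc x $ j) = 1" for j
    proof -
      have "(2 * (1 + Hc x $ j) - \<tau>) / \<tau> \<ge> 1" using big[of j] t0 by (simp add: field_simps)
      then show ?thesis unfolding rho_def by simp
    qed
    show ?thesis unfolding Gm_def \<tau>_def[symmetric] Hm_def using v r by simp
  next
    case True
    show ?thesis
    proof (cases "\<forall>j. 1 + Hc x $ j \<ge> \<tau>/2")
      case True
      then show ?thesis unfolding Gm_def \<tau>_def[symmetric] Hm_def using vx \<open>\<psi> x = 0\<close> by simp
    next
      case False
      then obtain j where j: "1 + Hc x $ j < \<tau>/2" by (auto simp: not_le)
      have "(2 * (1 + Hc x $ j) - \<tau>) / \<tau> < 0" using j t0 by (simp add: divide_neg_pos)
      then have "rho \<tau> (Hc x $ j) = 0" unfolding rho_def by simp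
      then have "(\<Prod>j\<in>UNIV. rho \<tau> (Hc x $ j)) = 0" by (intro prod_zero) auto
      then show ?thesis unfolding Gm_def \<tau>_def[symmetric] Hm_def using \<open>\<psi> x = 0\<close> by simp
    qed
  qed
qed

lemma Lp_int_cont_supp:
  fixes g :: "real^'n \<Rightarrow> complex"
  assumes p: "0 < p" and cg: "continuous_on UNIV g" and supp: "\<forall>x. g x \<noteq> 0 \<longrightarrow> norm x \<le> M"
  shows "Lp_int p g < \<infinity>"
proof -
  have "bounded (g ` cball 0 M)"
    by (intro compact_imp_bounded compact_continuous_image continuous_on_subset[OF cg]) auto
  then obtain B where B: "\<forall>x\<in>cball 0 M. cmod (g x) \<le> B" unfolding bounded_iff by auto
  have "Lp_int p g \<le> (\<integral>\<^sup>+x. ennreal (B powr p) * indicator (cball (0::real^'n) M) x \<partial>lebesgue)"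
    unfolding Lp_int_def
  proof (intro nn_integral_mono)
    fix x :: "real^'n"
    show "ennreal (cmod (g x) powr p) \<le> ennreal (B powr p) * indicator (cball 0 M) x"
    proof (cases "g x = 0")
      case True then show ?thesis using p by simp
    next
      case False
      then have "x \<in> cball 0 M" using supp by auto
      then have "cmod (g x) powr p \<le> B powr p" using B p by (intro powr_mono2) auto
      then show ?thesis using \<open>x \<in> cball 0 M\<close> by (simp add: ennreal_leI)
    qed
  qed
  also have "\<dots> = ennreal (B powr p) * emeasure lebesgue (cball (0::real^'n) M)"
    by (rule nn_integral_cmult_indicator) simp
  also have "\<dots> < \<infinity>"
    using lmeasurable_cball[of "0::real^'n" M] by (simp add: fmeasurable_def ennreal_mult_less_top)
  finally show ?thesis .
qed



lemma approx_cont: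
  fixes g :: "real^'n \<Rightarrow> complex" and \<delta> :: real
  assumes p: "0 < p" "p \<le> 1" and cg: "continuous_on UNIV g"
    and supp: "\<forall>x. g x \<noteq> 0 \<longrightarrow> norm x \<le> M" and d: "\<delta> > 0"
  shows "\<exists>R. R \<in> ratA \<and> in_Lp p R \<and> Lp_int p (\<lambda>x. g x - R x) < ennreal \<delta>"
proof -
  define L :: nat where "L = nat \<lceil>real CARD('n) / p\<rceil> + 1"
  have L1: "L \<ge> 1" by (simp add: L_def)
  have "real L \<ge> real CARD('n) / p + 1" unfolding L_def by linarith
  then have "real L * p \<ge> (real CARD('n) / p + 1) * p" using p by (intro mult_right_mono) auto
  moreover have "(real CARD('n) / p + 1) * p = real CARD('n) + p" using p by (simp add: field_simps)
  ultimately have "real L * p \<ge> real CARD('n) + p" by simp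
  then have Ln: "real CARD('n) < 2 * real L * p" using p by linarith
  define W where "W = (\<integral>\<^sup>+x. ennreal ((1 / den (\<lambda>_. L) (x::real^'n)) powr p) \<partial>lebesgue)"
  have Wfin: "W < \<infinity>" unfolding W_def by (rule weight_int[OF p(1)]) (use Ln in simp)
  define W' where "W' = enn2real W"
  have W'0: "W' \<ge> 0" by (simp add: W'_def)
  have WW': "W = ennreal W'" unfolding W'_def using Wfin by simp
  define \<eta> where "\<eta> = (\<delta> / (2 * (W' + 1))) powr (1/p)"
  have \<eta>0: "\<eta> > 0" unfolding \<eta>_def using d W'0 by simp
  have \<eta>p: "\<eta> powr p = \<delta> / (2 * (W' + 1))" unfolding \<eta>_def using d W'0 p by (simp add: powr_powr)
  have \<eta>W: "\<eta> powr p * W' < \<delta>"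
  proof -
    have "\<eta> powr p * W' \<le> \<eta> powr p * (W' + 1)" using \<eta>0 by simp
    also have "\<dots> = \<delta> / 2" unfolding \<eta>p using W'0 by (simp add: field_simps)
    finally show ?thesis using d by simp
  qed
  define M' where "M' = max M 0"
  define \<psi> where "\<psi> x = g x * complex_of_real (den (\<lambda>_. L) x)" for x
  define \<tau> where "\<tau> = 2 / (1 + M'^2)"
  have t0: "\<tau> > 0" unfolding \<tau>_def by (simp add: add_pos_nonneg)
  have cden: "continuous_on UNIV (\<lambda>x::real^'n. den (\<lambda>_. L) x)"
    unfolding den_def by (intro continuous_intros)
  have c\<psi>: "continuous_on UNIV \<psi>" unfolding \<psi>_def[abs_def]
    by (intro continuous_intros cg cden)
  have s\<psi>: "\<forall>j. \<bar>x $ j\<bar> \<le> M'" if "\<psi> x \<noteq> 0" for x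
  proof
    fix j
    have "g x \<noteq> 0" using that by (simp add: \<psi>_def)
    then have "norm x \<le> M" using supp by auto
    then show "\<bar>x $ j\<bar> \<le> M'" using component_le_norm_cart[of x j] by (simp add: M'_def)
  qed
  define G where "G = Gm \<tau> \<psi>"
  have cG: "continuous_on UNIV G" unfolding G_def by (rule Gm_cont[OF c\<psi> t0])
  have GH: "G (Hm x) = \<psi> x" for x
    unfolding G_def \<tau>_def by (rule Gm_Hm) (use s\<psi> in \<open>auto simp: M'_def\<close>)
  define K where "K = cball (0 :: (real^'n) \<times> (real^'n)) (2 * real CARD('n))"
  obtain Q where Q: "polynomial_function Q" "\<forall>v\<in>K. norm (G v - Q v) < \<eta>"
    using Stone_Weierstrass_polynomial_function[of K G \<eta>] cG \<eta>0
    unfolding K_def by (auto intro: continuous_on_subset)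
  define R where "R x = Q (Hm x) / complex_of_real (den (\<lambda>_. L) x)" for x
  have RA: "R \<in> ratA"
    unfolding R_def[abs_def] by (rule Bc_ratA[OF Bc_pf[OF Q(1)] L1])
  have cR: "continuous_on UNIV R"
  proof -
    have "continuous_on UNIV (\<lambda>x. Q (Hm x))"
      by (rule continuous_on_compose2[OF continuous_on_polymonial_function[OF Q(1)] continuous_Hm]) auto
    moreover have "complex_of_real (den (\<lambda>_. L) x) \<noteq> 0" for x :: "real^'n"
      using den_pos[of "\<lambda>_. L" x] by simp
    ultimately show ?thesis unfolding R_def[abs_def] using cden
      by (intro continuous_intros) auto
  qed
  have mR: "R \<in> borel_measurable lebesgue" by (rule cont_meas[OF cR])
  have mg: "g \<in> borel_measurable lebesgue" by (rule cont_meas[OF cg])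
  have pt: "cmod (g x - R x) powr p \<le> \<eta> powr p * (1 / den (\<lambda>_. L) x) powr p" for x
  proof -
    have dp: "den (\<lambda>_. L) x > 0" by (rule den_pos)
    have "Hm x \<in> K" unfolding K_def using norm_Hm[of x] by simp
    then have lt: "cmod (G (Hm x) - Q (Hm x)) < \<eta>" using Q(2) by auto
    have "g x = \<psi> x / complex_of_real (den (\<lambda>_. L) x)" using dp by (simp add: \<psi>_def)
    then have "g x - R x = (G (Hm x) - Q (Hm x)) / complex_of_real (den (\<lambda>_. L) x)"
      by (simp add: GH R_def diff_divide_distrib)
    then have "cmod (g x - R x) = cmod (G (Hm x) - Q (Hm x)) * (1 / den (\<lambda>_. L) x)"
      using dp by (simp add: norm_divide)
    also have "\<dots> \<le> \<eta> * (1 / den (\<lambda>_. L) x)" using lt dp by (intro mult_right_mono) auto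
    finally have "cmod (g x - R x) powr p \<le> (\<eta> * (1 / den (\<lambda>_. L) x)) powr p"
      using p by (intro powr_mono2) auto
    also have "\<dots> = \<eta> powr p * (1 / den (\<lambda>_. L) x) powr p"
      using \<eta>0 dp by (subst powr_mult) auto
    finally show ?thesis .
  qed
  have "Lp_int p (\<lambda>x. g x - R x) \<le> (\<integral>\<^sup>+x. ennreal (\<eta> powr p) * ennreal ((1 / den (\<lambda>_. L) (x::real^'n)) powr p) \<partial>lebesgue)"
    unfolding Lp_int_def
    by (intro nn_integral_mono) (simp add: pt ennreal_leI flip: ennreal_mult)
  also have "\<dots> = ennreal (\<eta> powr p) * W"
  proof -
    have "continuous_on UNIV (\<lambda>x::real^'n. (1 / den (\<lambda>_. L) x) powr p)"
    proof -
      have dn: "den (\<lambda>_. L) x \<noteq> 0" "den (\<lambda>_. L) x > 0" for x :: "real^'n" using den_pos[of "\<lambda>_. L" x] by auto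
      show ?thesis by (intro continuous_intros cden) (use dn in auto)
    qed
    then have "(\<lambda>x::real^'n. (1 / den (\<lambda>_. L) x) powr p) \<in> borel_measurable lebesgue" by (rule cont_meas)
    then have "(\<lambda>x::real^'n. ennreal ((1 / den (\<lambda>_. L) x) powr p)) \<in> borel_measurable lebesgue"
      using measurable_compose[OF _ measurable_ennreal] by blast
    then show ?thesis unfolding W_def by (rule nn_integral_cmult)
  qed
  also have "\<dots> = ennreal (\<eta> powr p * W')" unfolding WW' by (rule ennreal_mult[symmetric]) (use W'0 in auto)
  also have "\<dots> < ennreal \<delta>" using \<eta>W d by (simp add: ennreal_lessI)
  finally have err: "Lp_int p (\<lambda>x. g x - R x) < ennreal \<delta>" .
  have "Lp_int p R = Lp_int p (\<lambda>x. g x + (R x - g x))" by simp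
  also have "\<dots> \<le> Lp_int p g + Lp_int p (\<lambda>x. R x - g x)"
    by (rule Lp_int_tri) (use p mg mR in auto)
  also have "Lp_int p (\<lambda>x. R x - g x) = Lp_int p (\<lambda>x. g x - R x)"
    unfolding Lp_int_def by (simp add: norm_minus_commute)
  also have "Lp_int p g + Lp_int p (\<lambda>x. g x - R x) < \<infinity>"
  proof -
    have "Lp_int p (\<lambda>x. g x - R x) < \<infinity>" using err by (metis ennreal_less_top infinity_ennreal_def order.strict_trans)
    then show ?thesis using Lp_int_cont_supp[OF p(1) cg supp] by (simp add: ennreal_add_less_top)
  qed
  finally have "Lp_int p R < \<infinity>" .
  then have "in_Lp p R" using mR by (simp add: in_Lp_def)
  then show ?thesis using RA err by blast
qed



definition capprox :: "real \<Rightarrow> (real^'n \<Rightarrow> complex) \<Rightarrow> bool" where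
  "capprox p f \<longleftrightarrow> (\<forall>\<delta>>0. \<exists>g. continuous_on UNIV g \<and> (\<exists>M. \<forall>x. g x \<noteq> 0 \<longrightarrow> norm x \<le> M) \<and>
       Lp_int p (\<lambda>x. f x - g x) < ennreal \<delta>)"

lemma capproxD:
  assumes "capprox p f" "\<delta> > 0"
  obtains g M where "continuous_on UNIV g" "\<forall>x. g x \<noteq> 0 \<longrightarrow> norm x \<le> M" "Lp_int p (\<lambda>x. f x - g x) < ennreal \<delta>"
  using assms unfolding capprox_def by blast

lemma capprox_cont:
  assumes "continuous_on UNIV g" "\<forall>x. g x \<noteq> 0 \<longrightarrow> norm x \<le> M" "p > 0"
  shows "capprox p g"
  unfolding capprox_def Lp_int_def using assms by (auto intro!: exI[of _ g] exI[of _ M])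

lemma capprox_add:
  assumes p: "0 < p" "p \<le> 1" and mf: "f \<in> borel_measurable lebesgue" and mh: "h \<in> borel_measurable lebesgue"
    and cf: "capprox p f" and ch: "capprox p h"
  shows "capprox p (\<lambda>x. f x + h x)"
  unfolding capprox_def
proof (intro allI impI)
  fix \<delta> :: real assume d: "\<delta> > 0"
  obtain g1 M1 where g1: "continuous_on UNIV g1" "\<forall>x. g1 x \<noteq> 0 \<longrightarrow> norm x \<le> M1" "Lp_int p (\<lambda>x. f x - g1 x) < ennreal (\<delta>/2)"
    using capproxD[OF cf, of "\<delta>/2"] d by auto
  obtain g2 M2 where g2: "continuous_on UNIV g2" "\<forall>x. g2 x \<noteq> 0 \<longrightarrow> norm x \<le> M2" "Lp_int p (\<lambda>x. h x - g2 x) < ennreal (\<delta>/2)"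
    using capproxD[OF ch, of "\<delta>/2"] d by auto
  have m1: "g1 \<in> borel_measurable lebesgue" by (rule cont_meas[OF g1(1)])
  have m2: "g2 \<in> borel_measurable lebesgue" by (rule cont_meas[OF g2(1)])
  have "Lp_int p (\<lambda>x. f x + h x - (g1 x + g2 x)) = Lp_int p (\<lambda>x. (f x - g1 x) + (h x - g2 x))"
    by (simp add: algebra_simps)
  also have "\<dots> \<le> Lp_int p (\<lambda>x. f x - g1 x) + Lp_int p (\<lambda>x. h x - g2 x)"
    by (rule Lp_int_tri) (use p mf mh m1 m2 in auto)
  also have "\<dots> < ennreal (\<delta>/2 + \<delta>/2)"
    using g1(3) g2(3) by (rule add_mono_ennreal)
  also have "\<dots> = ennreal \<delta>" by simp
  finally have err: "Lp_int p (\<lambda>x. f x + h x - (g1 x + g2 x)) < ennreal \<delta>" .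
  have "\<forall>x. g1 x + g2 x \<noteq> 0 \<longrightarrow> norm x \<le> max M1 M2"
    using g1(2) g2(2) by (metis add.right_neutral add_0 max.coboundedI1 max.coboundedI2)
  moreover have "continuous_on UNIV (\<lambda>x. g1 x + g2 x)" by (intro continuous_intros g1(1) g2(1))
  ultimately show "\<exists>g. continuous_on UNIV g \<and> (\<exists>M. \<forall>x. g x \<noteq> 0 \<longrightarrow> norm x \<le> M) \<and>
       Lp_int p (\<lambda>x. f x + h x - g x) < ennreal \<delta>"
    using err by blast
qed

lemma capprox_cmult:
  assumes p: "0 < p" and mf: "f \<in> borel_measurable lebesgue" and cf: "capprox p f"
  shows "capprox p (\<lambda>x. c * f x)"
proof (cases "c = 0")
  case True
  then show ?thesis using capprox_cont[of "\<lambda>_. 0" 0 p] p by simp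
next
  case False
  show ?thesis unfolding capprox_def
  proof (intro allI impI)
    fix \<delta> :: real assume d: "\<delta> > 0"
    have cp: "cmod c powr p > 0" using False by simp
    obtain g M where g: "continuous_on UNIV g" "\<forall>x. g x \<noteq> 0 \<longrightarrow> norm x \<le> M"
      "Lp_int p (\<lambda>x. f x - g x) < ennreal (\<delta> / cmod c powr p)"
      using capproxD[OF cf, of "\<delta> / cmod c powr p"] d cp by auto
    have mg: "g \<in> borel_measurable lebesgue" by (rule cont_meas[OF g(1)])
    have "Lp_int p (\<lambda>x. c * f x - c * g x) = Lp_int p (\<lambda>x. c * (f x - g x))"
      by (simp add: algebra_simps)
    also have "\<dots> = ennreal (cmod c powr p) * Lp_int p (\<lambda>x. f x - g x)"
      by (rule Lp_int_cmult) (use p mf mg in auto)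
    also have "\<dots> < ennreal (cmod c powr p) * ennreal (\<delta> / cmod c powr p)"
      using g(3) cp by (simp add: ennreal_mult_strict_left_mono)
    also have "\<dots> = ennreal (cmod c powr p * (\<delta> / cmod c powr p))"
      by (rule ennreal_mult[symmetric]) (use cp d in auto)
    also have "\<dots> = ennreal \<delta>" using cp by simp
    finally have err: "Lp_int p (\<lambda>x. c * f x - c * g x) < ennreal \<delta>" .
    have "\<forall>x. c * g x \<noteq> 0 \<longrightarrow> norm x \<le> M" using g(2) by auto
    moreover have "continuous_on UNIV (\<lambda>x. c * g x)" by (intro continuous_intros g(1))
    ultimately show "\<exists>g. continuous_on UNIV g \<and> (\<exists>M. \<forall>x. g x \<noteq> 0 \<longrightarrow> norm x \<le> M) \<and>
       Lp_int p (\<lambda>x. c * f x - g x) < ennreal \<delta>"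
      using err by blast
  qed
qed

lemma capprox_lim:
  assumes p: "0 < p" "p \<le> 1" and mf: "f \<in> borel_measurable lebesgue"
    and H: "\<And>\<delta>. \<delta> > 0 \<Longrightarrow> \<exists>h. h \<in> borel_measurable lebesgue \<and> capprox p h \<and> Lp_int p (\<lambda>x. f x - h x) < ennreal \<delta>"
  shows "capprox p f"
  unfolding capprox_def
proof (intro allI impI)
  fix \<delta> :: real assume d: "\<delta> > 0"
  obtain h where h: "h \<in> borel_measurable lebesgue" "capprox p h" "Lp_int p (\<lambda>x. f x - h x) < ennreal (\<delta>/2)"
    using H[of "\<delta>/2"] d by auto
  obtain g M where g: "continuous_on UNIV g" "\<forall>x. g x \<noteq> 0 \<longrightarrow> norm x \<le> M" "Lp_int p (\<lambda>x. h x - g x) < ennreal (\<delta>/2)"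
    using capproxD[OF h(2), of "\<delta>/2"] d by auto
  have mg: "g \<in> borel_measurable lebesgue" by (rule cont_meas[OF g(1)])
  have "Lp_int p (\<lambda>x. f x - g x) \<le> Lp_int p (\<lambda>x. f x - h x) + Lp_int p (\<lambda>x. h x - g x)"
    by (rule Lp_int_diff_tri) (use p mf h(1) mg in auto)
  also have "\<dots> < ennreal (\<delta>/2 + \<delta>/2)"
    using h(3) g(3) by (rule add_mono_ennreal)
  also have "\<dots> = ennreal \<delta>" by simp
  finally show "\<exists>g. continuous_on UNIV g \<and> (\<exists>M. \<forall>x. g x \<noteq> 0 \<longrightarrow> norm x \<le> M) \<and>
       Lp_int p (\<lambda>x. f x - g x) < ennreal \<delta>" using g by blast
qed

lemma capprox_zero: "p > 0 \<Longrightarrow> capprox p (\<lambda>_. 0)"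
  using capprox_cont[of "\<lambda>_. 0" 0 p] by simp



lemma capprox_ind_bounded:
  fixes E :: "(real^'n) set"
  assumes p: "0 < p" "p \<le> 1" and E: "E \<in> sets lebesgue" "E \<subseteq> ball 0 r"
  shows "capprox p (\<lambda>x. complex_of_real (indicator E x))"
  unfolding capprox_def
proof (intro allI impI)
  fix \<delta> :: real assume d: "\<delta> > 0"
  obtain T where T: "closed T" "T \<subseteq> E" "E - T \<in> lmeasurable" "emeasure lebesgue (E - T) < ennreal (\<delta>/2)"
    using sets_lebesgue_inner_closed[OF E(1), of "\<delta>/2"] d by auto
  obtain U where U: "open U" "E \<subseteq> U" "U - E \<in> lmeasurable" "emeasure lebesgue (U - E) < ennreal (\<delta>/2)"
    using sets_lebesgue_outer_open[OF E(1), of "\<delta>/2"] d by auto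
  define V where "V = U \<inter> ball 0 r"
  have EV: "E \<subseteq> V" using E(2) U(2) by (auto simp: V_def)
  have cV: "closed (- V)" unfolding V_def using U(1) by auto
  have dis: "T \<inter> - V = {}" using T(2) EV by auto
  obtain \<phi> :: "real^'n \<Rightarrow> real" where \<phi>: "continuous_on UNIV \<phi>" "\<And>x. \<phi> x \<in> closed_segment 1 0"
    "\<And>x. x \<in> T \<Longrightarrow> \<phi> x = 1" "\<And>x. x \<in> - V \<Longrightarrow> \<phi> x = 0"
    using Urysohn[OF T(1) cV dis, of 1 0] by blast
  have \<phi>01: "0 \<le> \<phi> x \<and> \<phi> x \<le> 1" for x using \<phi>(2)[of x] by (simp add: closed_segment_eq_real_ivl)
  define g where "g x = complex_of_real (\<phi> x)" for x
  have cg: "continuous_on UNIV g" unfolding g_def[abs_def] by (intro continuous_intros \<phi>(1))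
  have sg: "\<forall>x. g x \<noteq> 0 \<longrightarrow> norm x \<le> r"
  proof (intro allI impI)
    fix x assume "g x \<noteq> 0"
    then have "x \<in> V" using \<phi>(4)[of x] by (auto simp: g_def)
    then show "norm x \<le> r" by (auto simp: V_def)
  qed
  define B where "B = (U - E) \<union> (E - T)"
  have Bs: "B \<in> sets lebesgue" unfolding B_def using T(3) U(3) by (auto simp: fmeasurable_def)
  have pt: "ennreal (cmod (complex_of_real (indicator E x) - g x) powr p) \<le> indicator B x" for x
  proof (cases "x \<in> B")
    case True
    have e: "complex_of_real (indicator E x) - g x = complex_of_real (indicator E x - \<phi> x)" by (simp add: g_def)
    have "\<bar>indicator E x - \<phi> x\<bar> \<le> (1::real)" using \<phi>01[of x] by (auto simp: indicator_def)
    then have "cmod (complex_of_real (indicator E x) - g x) \<le> 1" unfolding e norm_of_real .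
    then have "cmod (complex_of_real (indicator E x) - g x) powr p \<le> 1"
      using p by (intro powr_le1) auto
    then show ?thesis using True by (simp add: ennreal_leI)
  next
    case False
    then have c: "(x \<in> U \<longrightarrow> x \<in> E) \<and> (x \<in> E \<longrightarrow> x \<in> T)" by (auto simp: B_def)
    have "complex_of_real (indicator E x) - g x = 0"
    proof (cases "x \<in> E")
      case True
      then show ?thesis using c \<phi>(3)[of x] by (simp add: g_def)
    next
      case False
      then have "x \<in> - V" using c by (auto simp: V_def)
      then show ?thesis using \<phi>(4)[of x] False by (simp add: g_def)
    qed
    then show ?thesis using p by simp
  qed
  have "Lp_int p (\<lambda>x. complex_of_real (indicator E x) - g x) \<le> (\<integral>\<^sup>+x. indicator B x \<partial>lebesgue)"
    unfolding Lp_int_def by (rule nn_integral_mono) (rule pt)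
  also have "\<dots> = emeasure lebesgue B" using Bs by simp
  also have "\<dots> \<le> emeasure lebesgue (U - E) + emeasure lebesgue (E - T)"
    unfolding B_def by (rule emeasure_subadditive) (use T(3) U(3) in \<open>auto simp: fmeasurable_def\<close>)
  also have "\<dots> < ennreal (\<delta>/2 + \<delta>/2)" using U(4) T(4) by (rule add_mono_ennreal)
  also have "\<dots> = ennreal \<delta>" by simp
  finally show "\<exists>g. continuous_on UNIV g \<and> (\<exists>M. \<forall>x. g x \<noteq> 0 \<longrightarrow> norm x \<le> M) \<and>
       Lp_int p (\<lambda>x. complex_of_real (indicator E x) - g x) < ennreal \<delta>"
    using cg sg by blast
qed

lemma capprox_ind_finite:
  fixes E :: "(real^'n) set"
  assumes p: "0 < p" "p \<le> 1" and E: "E \<in> sets lebesgue" "emeasure lebesgue E < \<infinity>"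
  shows "capprox p (\<lambda>x. complex_of_real (indicator E x))"
proof (rule capprox_lim[OF p])
  show "(\<lambda>x. complex_of_real (indicator E x)) \<in> borel_measurable lebesgue" using E(1) by measurable
  fix \<delta> :: real assume d: "\<delta> > 0"
  have bs[measurable]: "ball (0::real^'n) r \<in> sets lebesgue" for r by (simp add: lmeasurable_ball fmeasurableD)
  define u where "u m x = (indicator (E - ball 0 (real m)) x :: ennreal)" for m and x :: "real^'n"
  have lim: "(\<lambda>m. \<integral>\<^sup>+x. u m x \<partial>lebesgue) \<longlonglongrightarrow> (\<integral>\<^sup>+(x::real^'n). 0 \<partial>lebesgue)"
  proof (rule nn_integral_dominated_convergence[where w="indicator E"])
    show "\<And>m. u m \<in> borel_measurable lebesgue" unfolding u_def[abs_def] using E(1) by measurable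
    show "(\<lambda>x. 0) \<in> borel_measurable lebesgue" by simp
    show "indicator E \<in> borel_measurable lebesgue" using E(1) by measurable
    show "\<And>j. AE x in lebesgue. u j x \<le> indicator E x" unfolding u_def by (auto split: split_indicator)
    show "(\<integral>\<^sup>+x. indicator E x \<partial>lebesgue) < \<infinity>" using E by simp
    show "AE x in lebesgue. (\<lambda>i. u i x) \<longlonglongrightarrow> 0"
    proof (rule AE_I2)
      fix x :: "real^'n"
      obtain m0 :: nat where m0: "norm x < real m0" using reals_Archimedean2 by blast
      have "eventually (\<lambda>m. u m x = 0) sequentially"
        using eventually_ge_at_top[of m0]
      proof eventually_elim
        case (elim m)
        then have "norm x < real m" using m0 by linarith
        then show ?case by (simp add: u_def dist_norm)
      qed
      then show "(\<lambda>i. u i x) \<longlonglongrightarrow> 0" by (rule tendsto_eventually)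
    qed
  qed
  then have "eventually (\<lambda>m. (\<integral>\<^sup>+x. u m x \<partial>lebesgue) < ennreal \<delta>) sequentially"
    using d by (intro order_tendstoD(2)) auto
  then obtain m where m: "(\<integral>\<^sup>+x. u m x \<partial>lebesgue) < ennreal \<delta>" by (meson eventually_sequentially order_refl)
  define h where "h x = complex_of_real (indicator (E \<inter> ball 0 (real m)) x)" for x :: "real^'n"
  have mh: "h \<in> borel_measurable lebesgue" unfolding h_def[abs_def] using E(1) by measurable
  have ch: "capprox p h" unfolding h_def[abs_def]
    by (rule capprox_ind_bounded[OF p _ , of _ "real m"]) (use E(1) in auto)
  have "Lp_int p (\<lambda>x. complex_of_real (indicator E x) - h x) = (\<integral>\<^sup>+x. u m x \<partial>lebesgue)"
    unfolding Lp_int_def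
  proof (rule nn_integral_cong)
    fix x :: "real^'n"
    show "ennreal (cmod (complex_of_real (indicator E x) - h x) powr p) = u m x"
      using p by (auto simp: h_def u_def indicator_def)
  qed
  with m show "\<exists>h. h \<in> borel_measurable lebesgue \<and> capprox p h \<and> Lp_int p (\<lambda>x. complex_of_real (indicator E x) - h x) < ennreal \<delta>"
    using mh ch by auto
qed



lemma capprox_simple:
  fixes s :: "real^'n \<Rightarrow> complex"
  assumes p: "0 < p" "p \<le> 1" and sf: "simple_function lebesgue s" and fin: "Lp_int p s < \<infinity>"
  shows "capprox p s"
proof -
  have ms: "s \<in> borel_measurable lebesgue" by (rule borel_measurable_simple_function[OF sf])
  have finr: "finite (range s)" using sf by (simp add: simple_function_def)
  have pre: "s -` {c} \<in> sets lebesgue" for c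
  proof (cases "c \<in> range s")
    case True then show ?thesis using sf by (auto simp: simple_function_def)
  next
    case False then have "s -` {c} = {}" by auto
    then show ?thesis by simp
  qed
  define t where "t c x = c * complex_of_real (indicator (s -` {c}) x)" for c x
  have mt: "t c \<in> borel_measurable lebesgue" for c
    unfolding t_def[abs_def] using pre[of c] by measurable
  have ct: "capprox p (t c)" for c
  proof (cases "c = 0")
    case True
    have "t c = (\<lambda>_. 0)" using True by (simp add: t_def[abs_def])
    then show ?thesis using capprox_zero[OF p(1)] by simp
  next
    case False
    have cp: "cmod c powr p > 0" using False by simp
    have "ennreal (cmod c powr p) * emeasure lebesgue (s -` {c}) = (\<integral>\<^sup>+x. ennreal (cmod c powr p) * indicator (s -` {c}) x \<partial>lebesgue)"
      by (rule nn_integral_cmult_indicator[symmetric]) (rule pre)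
    also have "\<dots> \<le> Lp_int p s"
      unfolding Lp_int_def by (rule nn_integral_mono) (auto split: split_indicator)
    also have "\<dots> < \<infinity>" by (rule fin)
    finally have "emeasure lebesgue (s -` {c}) < \<infinity>"
      using cp by (auto simp: ennreal_mult_less_top top_unique)
    then have ci: "capprox p (\<lambda>x. complex_of_real (indicator (s -` {c}) x))"
      by (intro capprox_ind_finite[OF p pre])
    show ?thesis unfolding t_def[abs_def]
      by (rule capprox_cmult[OF p(1) _ ci]) (use pre[of c] in measurable)
  qed
  have "finite F \<Longrightarrow> capprox p (\<lambda>x. \<Sum>c\<in>F. t c x) \<and> (\<lambda>x. \<Sum>c\<in>F. t c x) \<in> borel_measurable lebesgue" for F
  proof (induction F rule: finite_induct)
    case empty then show ?case using capprox_zero[OF p(1)] by simp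
  next
    case (insert a F)
    have "capprox p (\<lambda>x. t a x + (\<Sum>c\<in>F. t c x))"
      by (rule capprox_add[OF p mt[of a] conjunct2[OF insert.IH] ct[of a] conjunct1[OF insert.IH]])
    moreover have "(\<lambda>x. t a x + (\<Sum>c\<in>F. t c x)) \<in> borel_measurable lebesgue"
      by (intro borel_measurable_add mt conjunct2[OF insert.IH])
    ultimately show ?case using insert by simp
  qed
  then have "capprox p (\<lambda>x. \<Sum>c\<in>range s. t c x)" using finr by blast
  moreover have "(\<Sum>c\<in>range s. t c x) = s x" for x
  proof -
    have "(\<Sum>c\<in>range s. t c x) = (\<Sum>c\<in>range s. if c = s x then s x else 0)"
      by (rule sum.cong) (auto simp: t_def)
    also have "\<dots> = s x" using finr by simp
    finally show ?thesis .
  qed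
  ultimately show ?thesis by simp
qed

lemma capprox_Lp:
  fixes f :: "real^'n \<Rightarrow> complex"
  assumes p: "0 < p" "p \<le> 1" and f: "in_Lp p f"
  shows "capprox p f"
proof -
  have mf: "f \<in> borel_measurable lebesgue" and ff: "Lp_int p f < \<infinity>" using f by (auto simp: in_Lp_def)
  obtain F where F: "\<And>i. simple_function lebesgue (F i)" "\<And>x. (\<lambda>i. F i x) \<longlonglongrightarrow> f x"
    "\<And>i x. cmod (F i x) \<le> 2 * cmod (f x)"
    using borel_measurable_implies_sequence_metric[OF mf, of 0] by (auto simp: dist_norm)
  have mF: "F i \<in> borel_measurable lebesgue" for i by (rule borel_measurable_simple_function[OF F(1)])
  have Fp: "Lp_int p (F i) < \<infinity>" for i
  proof -
    have "Lp_int p (F i) \<le> (\<integral>\<^sup>+x. ennreal (2 powr p) * ennreal (cmod (f x) powr p) \<partial>lebesgue)"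
      unfolding Lp_int_def
    proof (rule nn_integral_mono)
      fix x
      have "cmod (F i x) powr p \<le> (2 * cmod (f x)) powr p" using F(3) p by (intro powr_mono2) auto
      also have "\<dots> = 2 powr p * cmod (f x) powr p" by (simp add: powr_mult)
      finally show "ennreal (cmod (F i x) powr p) \<le> ennreal (2 powr p) * ennreal (cmod (f x) powr p)"
        by (simp add: ennreal_leI flip: ennreal_mult)
    qed
    also have "\<dots> = ennreal (2 powr p) * Lp_int p f"
      unfolding Lp_int_def by (rule nn_integral_cmult) (use mf in measurable)
    also have "\<dots> < \<infinity>" using ff by (simp add: ennreal_mult_less_top)
    finally show ?thesis .
  qed
  have lim: "(\<lambda>i. Lp_int p (\<lambda>x. f x - F i x)) \<longlonglongrightarrow> (\<integral>\<^sup>+(x::real^'n). 0 \<partial>lebesgue)"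
    unfolding Lp_int_def
  proof (rule nn_integral_dominated_convergence[where w="\<lambda>x. ennreal (3 powr p) * ennreal (cmod (f x) powr p)"])
    show "\<And>i. (\<lambda>x. ennreal (cmod (f x - F i x) powr p)) \<in> borel_measurable lebesgue"
      using mf mF by measurable
    show "(\<lambda>x. 0) \<in> borel_measurable lebesgue" by simp
    show "(\<lambda>x. ennreal (3 powr p) * ennreal (cmod (f x) powr p)) \<in> borel_measurable lebesgue"
      using mf by measurable
    show "AE x in lebesgue. ennreal (cmod (f x - F j x) powr p) \<le> ennreal (3 powr p) * ennreal (cmod (f x) powr p)" for j
    proof (rule AE_I2)
      fix x
      have "cmod (f x - F j x) \<le> cmod (f x) + cmod (F j x)" by (rule norm_triangle_ineq4)
      also have "\<dots> \<le> 3 * cmod (f x)" using F(3)[of j x] by simp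
      finally have "cmod (f x - F j x) powr p \<le> (3 * cmod (f x)) powr p" using p by (intro powr_mono2) auto
      also have "\<dots> = 3 powr p * cmod (f x) powr p" by (simp add: powr_mult)
      finally show "ennreal (cmod (f x - F j x) powr p) \<le> ennreal (3 powr p) * ennreal (cmod (f x) powr p)"
        by (simp add: ennreal_leI flip: ennreal_mult)
    qed
    show "(\<integral>\<^sup>+x. ennreal (3 powr p) * ennreal (cmod (f x) powr p) \<partial>lebesgue) < \<infinity>"
    proof -
      have "(\<integral>\<^sup>+x. ennreal (3 powr p) * ennreal (cmod (f x) powr p) \<partial>lebesgue) = ennreal (3 powr p) * Lp_int p f"
        unfolding Lp_int_def by (rule nn_integral_cmult) (use mf in measurable)
      then show ?thesis using ff by (simp add: ennreal_mult_less_top)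
    qed
    show "AE x in lebesgue. (\<lambda>i. ennreal (cmod (f x - F i x) powr p)) \<longlonglongrightarrow> 0"
    proof (rule AE_I2)
      fix x
      have "(\<lambda>i. cmod (f x - F i x)) \<longlonglongrightarrow> 0"
        using tendsto_diff[OF tendsto_const[of "f x"] F(2)[of x]] by (simp add: tendsto_norm_zero_iff)
      then have l0: "(\<lambda>i. cmod (f x - F i x) powr p) \<longlonglongrightarrow> 0"
        by (rule tendsto_zero_powrI) (use p in auto)
      show "(\<lambda>i. ennreal (cmod (f x - F i x) powr p)) \<longlonglongrightarrow> 0"
        using tendsto_ennrealI[OF l0] by simp
    qed
  qed
  show ?thesis
  proof (rule capprox_lim[OF p mf])
    fix \<delta> :: real assume d: "\<delta> > 0"
    have "eventually (\<lambda>i. Lp_int p (\<lambda>x. f x - F i x) < ennreal \<delta>) sequentially"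
      using lim d by (intro order_tendstoD(2)) auto
    then obtain i where i: "Lp_int p (\<lambda>x. f x - F i x) < ennreal \<delta>" by (meson eventually_sequentially order_refl)
    have "capprox p (F i)" by (rule capprox_simple[OF p F(1) Fp])
    then show "\<exists>h. h \<in> borel_measurable lebesgue \<and> capprox p h \<and> Lp_int p (\<lambda>x. f x - h x) < ennreal \<delta>"
      using mF i by blast
  qed
qed



lemma approx_rat:
  fixes f :: "real^'n \<Rightarrow> complex" and \<delta> :: real
  assumes p: "0 < p" "p \<le> 1" and f: "in_Lp p f" and d: "\<delta> > 0"
  shows "\<exists>R. R \<in> ratA \<and> in_Lp p R \<and> Lp_int p (\<lambda>x. f x - R x) < ennreal \<delta>"
proof -
  have mf: "f \<in> borel_measurable lebesgue" using f by (simp add: in_Lp_def)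
  obtain g M where g: "continuous_on UNIV g" "\<forall>x. g x \<noteq> 0 \<longrightarrow> norm x \<le> M" "Lp_int p (\<lambda>x. f x - g x) < ennreal (\<delta>/2)"
    using capproxD[OF capprox_Lp[OF p f], of "\<delta>/2"] d by auto
  obtain R where R: "R \<in> ratA" "in_Lp p R" "Lp_int p (\<lambda>x. g x - R x) < ennreal (\<delta>/2)"
    using approx_cont[OF p g(1) g(2), of "\<delta>/2"] d by auto
  have "Lp_int p (\<lambda>x. f x - R x) \<le> Lp_int p (\<lambda>x. f x - g x) + Lp_int p (\<lambda>x. g x - R x)"
    by (rule Lp_int_diff_tri) (use p mf cont_meas[OF g(1)] R(2) in \<open>auto simp: in_Lp_def\<close>)
  also have "\<dots> < ennreal (\<delta>/2 + \<delta>/2)" using g(3) R(3) by (rule add_mono_ennreal)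
  finally show ?thesis using R by auto
qed

lemma Lp_norm_powr:
  assumes "0 < p"
  shows "Lp_norm p h powr p = enn2real (Lp_int p h)"
  unfolding Lp_norm_def using assms by (simp add: powr_powr)

lemma Lp_int_uminus: "Lp_int p (\<lambda>x. - h x) = Lp_int p h"
  unfolding Lp_int_def by simp

lemma ratA_zero: "(\<lambda>_. 0) \<in> ratA"
  unfolding ratA_def
  by (intro CollectI exI[of _ "\<lambda>_. 1"] exI[of _ "\<lambda>_. 0"] exI[of _ "\<lambda>_. 0"]) simp

theorem lemma3p2:
  fixes p :: real and f :: "real^'n \<Rightarrow> complex" and \<epsilon> :: real
  assumes "0 < p" "p < 1" "in_Lp p f" "\<epsilon> > 0"
  shows "\<exists>R :: nat \<Rightarrow> real^'n \<Rightarrow> complex.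
           (\<forall>k. R k \<in> ratA \<and> in_Lp p (R k)) \<and>
           summable (\<lambda>k. Lp_norm p (R k) powr p) \<and>
           (\<Sum>k. Lp_norm p (R k) powr p) \<le> (1 + \<epsilon>) * Lp_norm p f powr p \<and>
           (\<lambda>N. Lp_norm p (\<lambda>x. f x - (\<Sum>k<N. R k x))) \<longlonglongrightarrow> 0"
proof -
  have p: "0 < p" "p \<le> 1" using assms by auto
  note f = assms(3)
  have mf: "f \<in> borel_measurable lebesgue" and ff: "Lp_int p f < \<infinity>" using f by (auto simp: in_Lp_def)
  define t where "t = enn2real (Lp_int p f)"
  have t0: "t \<ge> 0" by (simp add: t_def)
  have ft: "Lp_norm p f powr p = t" unfolding t_def by (rule Lp_norm_powr[OF p(1)])
  show ?thesis
  proof (cases "t = 0")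
    case True
    have z: "in_Lp p (\<lambda>_. 0)" by (simp add: in_Lp_def Lp_int_def)
    have z2: "Lp_norm p (\<lambda>_. 0) powr p = 0" using p by (simp add: Lp_norm_powr Lp_int_def)
    have z3: "Lp_norm p f = 0" using True unfolding Lp_norm_def t_def by simp
    have z4: "(\<lambda>k::nat. Lp_norm p (\<lambda>_::real^'n. 0::complex) powr p) = (\<lambda>_. 0)"
      by (simp add: Lp_norm_def Lp_int_def)
    show ?thesis
      by (intro exI[of _ "\<lambda>_ _. 0"] conjI allI) (use ratA_zero z z4 z3 True ft in auto)
  next
    case False
    then have tp: "t > 0" using t0 by simp
    define \<delta> where "\<delta> k = \<epsilon> * t / 4 * (1/2)^k" for k :: nat
    have dp: "\<delta> k > 0" for k using tp assms(4) by (simp add: \<delta>_def)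
    define ch where "ch h d = (SOME R. R \<in> ratA \<and> in_Lp p R \<and> Lp_int p (\<lambda>x. h x - R x) < ennreal d)" for h :: "real^'n \<Rightarrow> complex" and d
    have chs: "ch h d \<in> ratA \<and> in_Lp p (ch h d) \<and> Lp_int p (\<lambda>x. h x - ch h d x) < ennreal d"
      if "in_Lp p h" "d > 0" for h d
      unfolding ch_def using someI_ex[OF approx_rat[OF p that]] by blast
    define r where "r = rec_nat f (\<lambda>k h x. h x - ch h (\<delta> k) x)"
    have r0: "r 0 = f" by (simp add: r_def)
    have rS: "r (Suc k) = (\<lambda>x. r k x - ch (r k) (\<delta> k) x)" for k by (simp add: r_def)
    define R where "R k = ch (r k) (\<delta> k)" for k
    have inv: "in_Lp p (r k)" for k
    proof (induction k)
      case 0 then show ?case using f r0 by simp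
    next
      case (Suc k)
      from chs[OF Suc dp[of k]] have c: "in_Lp p (R k)" "Lp_int p (\<lambda>x. r k x - R k x) < ennreal (\<delta> k)"
        by (auto simp: R_def)
      have "(\<lambda>x. r k x - R k x) \<in> borel_measurable lebesgue"
        using Suc c(1) by (auto simp: in_Lp_def)
      moreover have "Lp_int p (\<lambda>x. r k x - R k x) < \<infinity>"
        using c(2) by (metis ennreal_less_top infinity_ennreal_def order.strict_trans)
      ultimately show ?case by (simp add: rS R_def[symmetric] in_Lp_def)
    qed
    have Rk: "R k \<in> ratA \<and> in_Lp p (R k)" and rSk: "Lp_int p (r (Suc k)) < ennreal (\<delta> k)" for k
      using chs[OF inv dp[of k]] by (auto simp: R_def rS)
    have rN: "r N = (\<lambda>x. f x - (\<Sum>k<N. R k x))" for N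
    proof (induction N)
      case 0 show ?case by (simp add: r0)
    next
      case (Suc N)
      have "r (Suc N) = (\<lambda>x. r N x - R N x)" by (simp add: rS R_def)
      then show ?case using Suc.IH by (simp add: algebra_simps)
    qed
    have Rr: "R k x = r k x - r (Suc k) x" for k x by (simp add: rS R_def)
    have finr: "Lp_int p (r k) < \<infinity>" for k using inv[of k] by (simp add: in_Lp_def)
    have er: "enn2real (Lp_int p (r (Suc k))) \<le> \<delta> k" for k
    proof -
      have "enn2real (Lp_int p (r (Suc k))) \<le> enn2real (ennreal (\<delta> k))"
        by (rule enn2real_mono) (use rSk[of k] in auto)
      then show ?thesis using dp[of k] by simp
    qed
    define a where "a k = Lp_norm p (R k) powr p" for k
    define e where "e k = (if k = 0 then t else \<delta> (k - 1))" for k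
    have ak: "a k \<le> e k + \<delta> k" for k
    proof -
      have "R k = (\<lambda>x. r k x + - r (Suc k) x)" using Rr by (intro ext) simp
      then have "Lp_int p (R k) = Lp_int p (\<lambda>x. r k x + - r (Suc k) x)" by simp
      also have "\<dots> \<le> Lp_int p (r k) + Lp_int p (\<lambda>x. - r (Suc k) x)"
        by (rule Lp_int_tri) (use p inv in \<open>auto simp: in_Lp_def\<close>)
      also have "\<dots> = Lp_int p (r k) + Lp_int p (r (Suc k))" by (simp add: Lp_int_uminus)
      finally have le: "Lp_int p (R k) \<le> Lp_int p (r k) + Lp_int p (r (Suc k))" .
      have "a k = enn2real (Lp_int p (R k))" unfolding a_def by (rule Lp_norm_powr[OF p(1)])
      also have "\<dots> \<le> enn2real (Lp_int p (r k) + Lp_int p (r (Suc k)))"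
        by (rule enn2real_mono[OF le]) (use finr in simp)
      also have "\<dots> = enn2real (Lp_int p (r k)) + enn2real (Lp_int p (r (Suc k)))"
        by (rule enn2real_plus) (use finr in auto)
      also have "\<dots> \<le> e k + \<delta> k"
      proof (cases k)
        case 0 then show ?thesis using er[of 0] by (simp add: e_def r0 t_def)
      next
        case (Suc j)
        then show ?thesis using er[of j] er[of k] by (simp add: e_def)
      qed
      finally show ?thesis .
    qed
    have a0: "a k \<ge> 0" for k by (simp add: a_def)
    have dsum: "\<delta> sums (\<epsilon> * t / 2)"
    proof -
      have g: "(\<lambda>k. (1/2::real)^k) sums 2" using geometric_sums[of "1/2::real"] by simp
      have "(\<lambda>k. \<epsilon> * t / 4 * (1/2::real)^k) sums (\<epsilon> * t / 4 * 2)"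
        by (rule sums_mult[OF g])
      then show ?thesis by (simp add: \<delta>_def[abs_def])
    qed
    have esum: "e sums (\<epsilon> * t / 2 + t)"
    proof -
      have "(\<lambda>k. e (Suc k)) sums (\<epsilon> * t / 2)" using dsum by (simp add: e_def)
      then show ?thesis using sums_Suc_iff[of e "\<epsilon> * t / 2"] by (simp add: e_def)
    qed
    have bsum: "(\<lambda>k. e k + \<delta> k) sums ((1 + \<epsilon>) * t)"
    proof -
      have "(\<lambda>k. e k + \<delta> k) sums ((\<epsilon> * t / 2 + t) + \<epsilon> * t / 2)" by (rule sums_add[OF esum dsum])
      then show ?thesis by (simp add: algebra_simps)
    qed
    have sa: "summable a"
      by (rule summable_comparison_test[of _ "\<lambda>k. e k + \<delta> k"]) (use ak a0 bsum in \<open>auto simp: sums_iff\<close>)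
    have "(\<Sum>k. a k) \<le> (\<Sum>k. e k + \<delta> k)"
      by (rule suminf_le) (use ak sa bsum in \<open>auto simp: sums_iff\<close>)
    also have "\<dots> = (1 + \<epsilon>) * t" using bsum by (simp add: sums_iff)
    finally have sle: "(\<Sum>k. a k) \<le> (1 + \<epsilon>) * Lp_norm p f powr p" using ft by simp
    have lim: "(\<lambda>N. Lp_norm p (r N)) \<longlonglongrightarrow> 0"
    proof (rule LIMSEQ_imp_Suc)
      have d0: "\<delta> \<longlonglongrightarrow> 0" using dsum by (rule summable_LIMSEQ_zero[OF sums_summable])
      have l1: "(\<lambda>k. \<delta> k powr (1/p)) \<longlonglongrightarrow> 0"
      proof (rule tendsto_zero_powrI[OF d0 tendsto_const])
        show "\<forall>\<^sub>F k in sequentially. 0 \<le> \<delta> k" using dp by (simp add: less_imp_le)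
        show "0 < 1 / p" using p by simp
      qed
      have l2: "Lp_norm p (r (Suc k)) \<le> \<delta> k powr (1/p)" for k
        unfolding Lp_norm_def using er[of k] p by (intro powr_mono2) auto
      have l3: "0 \<le> Lp_norm p (r (Suc k))" for k by (simp add: Lp_norm_def)
      have e1: "eventually (\<lambda>k. 0 \<le> Lp_norm p (r (Suc k))) sequentially" using l3 by simp
      have e2: "eventually (\<lambda>k. Lp_norm p (r (Suc k)) \<le> \<delta> k powr (1/p)) sequentially" using l2 by simp
      show "(\<lambda>k. Lp_norm p (r (Suc k))) \<longlonglongrightarrow> 0"
        by (rule real_tendsto_sandwich[OF e1 e2 tendsto_const l1])
    qed
    show ?thesis
    proof (intro exI[of _ R] conjI allI)
      fix k show "R k \<in> ratA" "in_Lp p (R k)" using Rk[of k] by auto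
    next
      show "summable (\<lambda>k. Lp_norm p (R k) powr p)" using sa by (simp add: a_def[abs_def])
    next
      show "(\<Sum>k. Lp_norm p (R k) powr p) \<le> (1 + \<epsilon>) * Lp_norm p f powr p" using sle by (simp add: a_def[abs_def])
    next
      show "(\<lambda>N. Lp_norm p (\<lambda>x. f x - (\<Sum>k<N. R k x))) \<longlonglongrightarrow> 0" using lim by (simp add: rN)
    qed
  qed
qed


end
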